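(* Let $X$ be a Banach space, $C\subset X$ a nonempty generalized polyhedral convex set, and $f(x)=\frac12\langle Mx,x\rangle+\langle q,x\rangle+\alpha$, where $M:X\to X^*$ is a bounded linear operator which is symmetric ($\langle Mx,y\rangle=\langle My,x\rangle$ for all $x,y\in X$), $q\in X^*$, $\alpha\in\mathbb R$. If $\bar x$ is a local minimum of $\min\{f(x)\mid x\in C\}$, then: (c0) $\langle M\bar x+q,v\rangle\ge0$ for all $v\in T_C(\bar x)$; (c1') for every $v\in T_C(\bar x)$ with $\langle M\bar x+q,v\rangle=0$, one has $\langle M\bar x+q,w\rangle\ge0$ for all $w\in T^2_C(\bar x,v)$; (c2') $\langle Mv,v\rangle\ge 0$ for all $v\in T_C(\bar x)$ with $\langle M\bar x+q,v\rangle=0$. *)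

theory Defs
  imports "HOL-Analysis.Analysis"
begin

definition gen_polyhedral :: "'a::real_normed_vector set \<Rightarrow> bool" where
  "gen_polyhedral C \<longleftrightarrow>
     (\<exists>L (m::nat) (xs :: nat \<Rightarrow> ('a \<Rightarrow>\<^sub>L real)) (a :: nat \<Rightarrow> real).
        affine L \<and> closed L \<and> C = {x \<in> L. \<forall>i<m. blinfun_apply (xs i) x \<le> a i})"

definition tangent_cone :: "'a::real_normed_vector set \<Rightarrow> 'a \<Rightarrow> 'a set" where
  "tangent_cone C x = {v. \<exists>(t :: nat \<Rightarrow> real) (w :: nat \<Rightarrow> 'a).
      (\<forall>k. t k > 0) \<and> t \<longlonglongrightarrow> 0 \<and> w \<longlonglongrightarrow> v \<and> (\<forall>k. x + t k *\<^sub>R w k \<in> C)}"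

definition second_order_tangent_set :: "'a::real_normed_vector set \<Rightarrow> 'a \<Rightarrow> 'a \<Rightarrow> 'a set" where
  "second_order_tangent_set C x v = {w. \<exists>(t :: nat \<Rightarrow> real) (u :: nat \<Rightarrow> 'a).
      (\<forall>k. t k > 0) \<and> t \<longlonglongrightarrow> 0 \<and> u \<longlonglongrightarrow> w \<and>
      (\<forall>k. x + t k *\<^sub>R v + ((t k)\<^sup>2 / 2) *\<^sub>R u k \<in> C)}"

end

theory Submission
  imports Defs
begin

lemma quad_expand:
  fixes M :: "'a::real_normed_vector \<Rightarrow> ('a \<Rightarrow>\<^sub>L real)"
  assumes "bounded_linear M" "\<forall>x y. blinfun_apply (M x) y = blinfun_apply (M y) x"
  shows "1/2 * blinfun_apply (M (x+d)) (x+d) + blinfun_apply q (x+d) + c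
    = (1/2 * blinfun_apply (M x) x + blinfun_apply q x + c) + blinfun_apply (M x + q) d
      + 1/2 * blinfun_apply (M d) d"
proof -
  have "M (x+d) = M x + M d" using assms(1) by (simp add: bounded_linear.linear linear_add)
  moreover have "blinfun_apply (M d) x = blinfun_apply (M x) d" using assms(2) by simp
  ultimately show ?thesis by (simp add: blinfun.add_left blinfun.add_right algebra_simps)
qed

lemma M_scale:
  fixes M :: "'a::real_normed_vector \<Rightarrow> ('a \<Rightarrow>\<^sub>L real)"
  assumes "bounded_linear M"
  shows "blinfun_apply (M (s *\<^sub>R d)) (s *\<^sub>R d) = s^2 * blinfun_apply (M d) d"
proof -
  have "M (s *\<^sub>R d) = s *\<^sub>R M d" using assms by (simp add: bounded_linear.linear linear_scale)
  then show ?thesis by (simp add: blinfun.scaleR_right blinfun.scaleR_left power2_eq_square)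
qed

theorem theorem3p4:
  fixes C :: "'a::banach set" and M :: "'a \<Rightarrow> ('a \<Rightarrow>\<^sub>L real)"
    and q :: "'a \<Rightarrow>\<^sub>L real" and \<alpha> :: real and xb :: 'a and f :: "'a \<Rightarrow> real"
  assumes "C \<noteq> {}" and "gen_polyhedral C"
    and "bounded_linear M"
    and "\<forall>x y. blinfun_apply (M x) y = blinfun_apply (M y) x"
    and "f = (\<lambda>x. 1/2 * blinfun_apply (M x) x + blinfun_apply q x + \<alpha>)"
    and "xb \<in> C"
    and "\<exists>\<epsilon>>0. \<forall>x\<in>C. norm (x - xb) < \<epsilon> \<longrightarrow> f xb \<le> f x"
  shows "(\<forall>v \<in> tangent_cone C xb. blinfun_apply (M xb + q) v \<ge> 0) \<and>
         (\<forall>v \<in> tangent_cone C xb. blinfun_apply (M xb + q) v = 0 \<longrightarrow>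
            (\<forall>w \<in> second_order_tangent_set C xb v. blinfun_apply (M xb + q) w \<ge> 0)) \<and>
         (\<forall>v \<in> tangent_cone C xb. blinfun_apply (M xb + q) v = 0 \<longrightarrow>
            blinfun_apply (M v) v \<ge> 0)"
proof -
  obtain L and m :: nat and xs and a :: "nat \<Rightarrow> real" where L: "affine L" "closed L"
    and Cdef: "C = {x \<in> L. \<forall>i<m. blinfun_apply (xs i) x \<le> a i}"
    using assms(2) unfolding gen_polyhedral_def by blast
  obtain \<epsilon> where ep: "\<epsilon> > 0" and mn: "\<forall>x\<in>C. norm (x - xb) < \<epsilon> \<longrightarrow> f xb \<le> f x"
    using assms(7) by blast
  define g where "g = M xb + q"
  have fexp: "f (xb + d) = f xb + blinfun_apply g d + 1/2 * blinfun_apply (M d) d" for d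
    using quad_expand[OF assms(3,4), of xb d q \<alpha>] assms(5) g_def by simp
  have fexps: "f (xb + s *\<^sub>R d) = f xb + s * blinfun_apply g d + s^2/2 * blinfun_apply (M d) d" for s d
    using fexp[of "s *\<^sub>R d"] M_scale[OF assms(3), of s d] by (simp add: blinfun.scaleR_right)
  have xbL: "xb \<in> L" using assms(6) unfolding Cdef by blast
  have conv: "xb + s *\<^sub>R (y - xb) \<in> C" if y: "y \<in> C" and s: "0 \<le> s" "s \<le> 1" for y s
  proof -
    have eq: "xb + s *\<^sub>R (y - xb) = (1 - s) *\<^sub>R xb + s *\<^sub>R y" by (simp add: algebra_simps)
    have yL: "y \<in> L" using y Cdef by auto
    have inL: "(1 - s) *\<^sub>R xb + s *\<^sub>R y \<in> L"
      using L(1) xbL yL unfolding affine_def by (metis diff_add_cancel)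
    have cons: "blinfun_apply (xs i) ((1 - s) *\<^sub>R xb + s *\<^sub>R y) \<le> a i" if i: "i < m" for i
    proof -
      have h1: "blinfun_apply (xs i) xb \<le> a i" "blinfun_apply (xs i) y \<le> a i"
        using i y assms(6) unfolding Cdef by auto
      have m1: "(1 - s) * blinfun_apply (xs i) xb \<le> (1 - s) * a i" using h1 s by (intro mult_left_mono) auto
      have m2: "s * blinfun_apply (xs i) y \<le> s * a i" using h1 s by (intro mult_left_mono) auto
      have e: "blinfun_apply (xs i) ((1 - s) *\<^sub>R xb + s *\<^sub>R y) = (1 - s) * blinfun_apply (xs i) xb + s * blinfun_apply (xs i) y"
        by (simp only: blinfun.add_right blinfun.scaleR_right real_scaleR_def)
      show ?thesis unfolding e using m1 m2 by argo
    qed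
    show ?thesis unfolding eq Cdef using inL cons by blast
  qed
  have A: "blinfun_apply g (y - xb) \<ge> 0" if y: "y \<in> C" for y
  proof -
    define d where "d = y - xb"
    have ev: "eventually (\<lambda>s. 0 \<le> blinfun_apply g d + s/2 * blinfun_apply (M d) d) (at_right 0)"
      unfolding eventually_at_right_field
    proof (intro exI[of _ "min 1 (\<epsilon> / (norm d + 1))"] conjI allI impI)
      have nd: "norm d + 1 > 0" using norm_ge_zero[of d] by linarith
      show "0 < min 1 (\<epsilon> / (norm d + 1))" using ep nd by simp
      fix s :: real assume s: "0 < s" "s < min 1 (\<epsilon> / (norm d + 1))"
      have nd: "norm d + 1 > 0" using norm_ge_zero[of d] by linarith
      have "s * (norm d + 1) < \<epsilon>" using s nd by (simp add: less_divide_eq)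
      moreover have "norm (s *\<^sub>R d) \<le> s * (norm d + 1)" using s by (simp add: algebra_simps)
      ultimately have "norm (s *\<^sub>R d) < \<epsilon>" by linarith
      moreover have "xb + s *\<^sub>R d \<in> C" using conv[OF y, of s] s d_def by simp
      ultimately have "f xb \<le> f (xb + s *\<^sub>R d)" using mn by auto
      hence "0 \<le> s * blinfun_apply g d + s^2/2 * blinfun_apply (M d) d"
        unfolding fexps by simp
      moreover have "s * blinfun_apply g d + s^2/2 * blinfun_apply (M d) d
          = s * (blinfun_apply g d + s/2 * blinfun_apply (M d) d)"
        by (simp add: power2_eq_square algebra_simps)
      ultimately have "0 \<le> s * (blinfun_apply g d + s/2 * blinfun_apply (M d) d)" by simp
      thus "0 \<le> blinfun_apply g d + s/2 * blinfun_apply (M d) d"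
        using s by (simp add: zero_le_mult_iff)
    qed
    have lim: "((\<lambda>s. blinfun_apply g d + s/2 * blinfun_apply (M d) d) \<longlongrightarrow>
        blinfun_apply g d + 0/2 * blinfun_apply (M d) d) (at_right 0)"
      by (intro tendsto_intros; simp)
    show ?thesis using tendsto_lowerbound[OF lim ev] d_def by simp
  qed
  have gcont: "(\<lambda>k. blinfun_apply h (w k)) \<longlonglongrightarrow> blinfun_apply h v" if "w \<longlonglongrightarrow> v" for h :: "'a \<Rightarrow>\<^sub>L real" and w v
    using that by (intro tendsto_intros)
  have c0: "blinfun_apply g v \<ge> 0" if v: "v \<in> tangent_cone C xb" for v
  proof -
    obtain t w where tw: "\<forall>k. t k > 0" "w \<longlonglongrightarrow> v" "\<forall>k. xb + t k *\<^sub>R w k \<in> C"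
      using v unfolding tangent_cone_def by blast
    have "blinfun_apply g (w k) \<ge> 0" for k
    proof -
      have "0 \<le> blinfun_apply g (xb + t k *\<^sub>R w k - xb)" using A tw(3) by blast
      hence "0 \<le> t k * blinfun_apply g (w k)" by (simp add: blinfun.scaleR_right)
      thus ?thesis using tw(1)[rule_format, of k] by (auto simp: zero_le_mult_iff)
    qed
    thus ?thesis using tendsto_lowerbound[OF gcont[OF tw(2)]] by simp
  qed
  have c1: "blinfun_apply g w \<ge> 0" if v: "v \<in> tangent_cone C xb" and gv: "blinfun_apply g v = 0"
    and w: "w \<in> second_order_tangent_set C xb v" for v w
  proof -
    obtain t u where tu: "\<forall>k. t k > 0" "u \<longlonglongrightarrow> w" "\<forall>k. xb + t k *\<^sub>R v + ((t k)\<^sup>2 / 2) *\<^sub>R u k \<in> C"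
      using w unfolding second_order_tangent_set_def by blast
    have "blinfun_apply g (u k) \<ge> 0" for k
    proof -
      have "0 \<le> blinfun_apply g (xb + t k *\<^sub>R v + ((t k)\<^sup>2 / 2) *\<^sub>R u k - xb)" using A tu(3) by blast
      hence "0 \<le> ((t k)\<^sup>2 / 2) * blinfun_apply g (u k)"
        using gv by (simp add: blinfun.scaleR_right blinfun.add_right)
      thus ?thesis using tu(1)[rule_format, of k] by (simp add: zero_le_mult_iff)
    qed
    thus ?thesis using tendsto_lowerbound[OF gcont[OF tu(2)]] by simp
  qed
  have feas: "\<exists>s>0. xb + s *\<^sub>R v \<in> C \<and> norm (s *\<^sub>R v) < \<epsilon>" if v: "v \<in> tangent_cone C xb" for v
  proof -
    obtain t w where tw: "\<forall>k. t k > 0" "w \<longlonglongrightarrow> v" "\<forall>k. xb + t k *\<^sub>R w k \<in> C"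
      using v unfolding tangent_cone_def by blast
    have inL: "xb + s *\<^sub>R v \<in> L" for s
    proof -
      have "xb + s *\<^sub>R w k \<in> L" for k
      proof -
        have "xb + t k *\<^sub>R w k \<in> L" using tw(3) Cdef by auto
        hence "(1 - s / t k) *\<^sub>R xb + (s / t k) *\<^sub>R (xb + t k *\<^sub>R w k) \<in> L"
          using L(1) xbL unfolding affine_def by auto
        moreover have "(1 - s / t k) *\<^sub>R xb + (s / t k) *\<^sub>R (xb + t k *\<^sub>R w k) = xb + s *\<^sub>R w k"
          using tw(1)[rule_format, of k] by (simp add: algebra_simps)
        ultimately show ?thesis by simp
      qed
      moreover have "(\<lambda>k. xb + s *\<^sub>R w k) \<longlonglongrightarrow> xb + s *\<^sub>R v" using tw(2) by (intro tendsto_intros)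
      ultimately show ?thesis by (rule closed_sequentially[OF L(2)])
    qed
    have evi: "eventually (\<lambda>s. blinfun_apply (xs i) (xb + s *\<^sub>R v) \<le> a i) (at_right 0)"
      if i: "i < m" for i
    proof (cases "blinfun_apply (xs i) xb < a i")
      case True
      have "((\<lambda>s. blinfun_apply (xs i) xb + s * blinfun_apply (xs i) v) \<longlongrightarrow>
          blinfun_apply (xs i) xb + 0 * blinfun_apply (xs i) v) (at_right 0)"
        by (intro tendsto_intros; simp)
      from order_tendstoD(2)[OF this] True
      have "eventually (\<lambda>s. blinfun_apply (xs i) xb + s * blinfun_apply (xs i) v < a i) (at_right 0)"
        by simp
      thus ?thesis by eventually_elim (simp add: blinfun.add_right blinfun.scaleR_right)
    next
      case False
      hence eq: "blinfun_apply (xs i) xb = a i" using assms(6) Cdef i by force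
      have "blinfun_apply (xs i) (w k) \<le> 0" for k
      proof -
        have "blinfun_apply (xs i) (xb + t k *\<^sub>R w k) \<le> a i" using tw(3) Cdef i by auto
        hence "t k * blinfun_apply (xs i) (w k) \<le> 0" using eq
          by (simp add: blinfun.add_right blinfun.scaleR_right)
        thus ?thesis using tw(1)[rule_format, of k] by (simp add: mult_le_0_iff)
      qed
      hence nv: "blinfun_apply (xs i) v \<le> 0" using tendsto_upperbound[OF gcont[OF tw(2)]] by simp
      show ?thesis using eventually_at_right_less[of "0::real"]
      proof eventually_elim
        case (elim s)
        have "s * blinfun_apply (xs i) v \<le> 0" using elim nv by (simp add: mult_le_0_iff)
        thus ?case using eq by (simp add: blinfun.add_right blinfun.scaleR_right)
      qed
    qed
    have ev1: "eventually (\<lambda>s. \<forall>i\<in>{..<m}. blinfun_apply (xs i) (xb + s *\<^sub>R v) \<le> a i) (at_right 0)"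
      using evi by (intro eventually_ball_finite) auto
    have "((\<lambda>s. norm (s *\<^sub>R v)) \<longlongrightarrow> norm ((0::real) *\<^sub>R v)) (at_right 0)"
      by (intro tendsto_intros; simp)
    from order_tendstoD(2)[OF this] ep
    have ev2: "eventually (\<lambda>s. norm (s *\<^sub>R v) < \<epsilon>) (at_right (0::real))" by simp
    have "eventually (\<lambda>s. s > 0 \<and> xb + s *\<^sub>R v \<in> C \<and> norm (s *\<^sub>R v) < \<epsilon>) (at_right 0)"
      using ev1 ev2 eventually_at_right_less[of "0::real"]
      by eventually_elim (use inL in \<open>auto simp: Cdef\<close>)
    from eventually_happens'[OF _ this] show ?thesis by auto
  qed
  have c2: "blinfun_apply (M v) v \<ge> 0" if v: "v \<in> tangent_cone C xb" and gv: "blinfun_apply g v = 0" for v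
  proof -
    obtain s where s: "s > 0" "xb + s *\<^sub>R v \<in> C" "norm (s *\<^sub>R v) < \<epsilon>" using feas[OF v] by blast
    have "f xb \<le> f (xb + s *\<^sub>R v)" using mn s by auto
    hence "0 \<le> s^2 * blinfun_apply (M v) v / 2"
      unfolding fexps using gv by simp
    thus ?thesis using s(1) by (simp add: zero_le_mult_iff zero_le_divide_iff)
  qed
  show ?thesis using c0 c1 c2 unfolding g_def by blast
qed

end
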